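(* If $r \geq 3$ and $t \geq r-1$ are integers, then for all $n$, \[ \mathrm{ex}_r ( n , \textup{Berge-}K_{2,t} ) \leq \left( \frac{ r - 1}{t} \binom{t}{r - 1} + 2t + 1 \right) \mathrm{ex}(n , K_{2,t}). \]
   Context: A hypergraph $H$ is a Berge-$F$ (for a graph $F$) if there is a bijection $f : E(F) \to E(H)$ with $e \subseteq f(e)$ for every $e \in E(F)$. $\mathrm{ex}_r(n,\textup{Berge-}F)$ is the maximum number of edges in an $n$-vertex $r$-uniform hypergraph containing no subhypergraph that is a Berge-$F$. $\mathrm{ex}(n,K_{2,t})$ is the usual Turán number: the maximum number of edges in an $n$-vertex graph with no subgraph isomorphic to $K_{2,t}$. *)

theory Defs
  imports Complex_Main
begin

text \<open>Vertex set of an n-vertex (hyper)graph: {0..<n}. A simple graph is a set of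
  2-element subsets; an r-uniform hypergraph is a set of r-element subsets.\<close>

definition uniform_hypergraph :: "nat \<Rightarrow> nat \<Rightarrow> nat set set \<Rightarrow> bool" where
  "uniform_hypergraph r n H \<longleftrightarrow> (\<forall>e\<in>H. e \<subseteq> {0..<n} \<and> card e = r)"

definition K2t_edges :: "nat \<Rightarrow> nat \<Rightarrow> nat set \<Rightarrow> nat set set" where
  "K2t_edges a b B = {{x, y} | x y. x \<in> {a, b} \<and> y \<in> B}"

definition is_K2t_copy :: "nat \<Rightarrow> nat \<Rightarrow> nat \<Rightarrow> nat set \<Rightarrow> bool" where
  "is_K2t_copy t a b B \<longleftrightarrow> a \<noteq> b \<and> finite B \<and> card B = t \<and> a \<notin> B \<and> b \<notin> B"

definition has_Berge_K2t :: "nat \<Rightarrow> nat set set \<Rightarrow> bool" where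
  "has_Berge_K2t t H \<longleftrightarrow> (\<exists>a b B f. is_K2t_copy t a b B \<and>
      inj_on f (K2t_edges a b B) \<and> f ` K2t_edges a b B \<subseteq> H \<and>
      (\<forall>e\<in>K2t_edges a b B. e \<subseteq> f e))"

definition has_K2t :: "nat \<Rightarrow> nat set set \<Rightarrow> bool" where
  "has_K2t t G \<longleftrightarrow> (\<exists>a b B. is_K2t_copy t a b B \<and> K2t_edges a b B \<subseteq> G)"

definition ex_Berge_K2t :: "nat \<Rightarrow> nat \<Rightarrow> nat \<Rightarrow> nat" where
  "ex_Berge_K2t r n t = Max {card H | H. uniform_hypergraph r n H \<and> \<not> has_Berge_K2t t H}"

definition ex_K2t :: "nat \<Rightarrow> nat \<Rightarrow> nat" where
  "ex_K2t n t = Max {card G | G. uniform_hypergraph 2 n G \<and> \<not> has_K2t t G}"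

end

theory Submission
  imports Defs
begin

definition valid_m :: "nat set set \<Rightarrow> nat set set \<Rightarrow> (nat set \<Rightarrow> nat set) \<Rightarrow> bool" where
  "valid_m H M g \<longleftrightarrow> M \<subseteq> H \<and> inj_on g M \<and> (\<forall>h\<in>M. g h \<subseteq> h \<and> card (g h) = 2)"

lemma unif_finite:
  assumes "uniform_hypergraph r n H" shows "finite H"
proof -
  have "H \<subseteq> Pow {0..<n}" using assms unfolding uniform_hypergraph_def by auto
  thus ?thesis by (rule finite_subset) auto
qed

lemma ex_K2t_ge:
  assumes "uniform_hypergraph 2 n G" "\<not> has_K2t t G"
  shows "card G \<le> ex_K2t n t"
proof -
  have "{card G | G. uniform_hypergraph 2 n G \<and> \<not> has_K2t t G} \<subseteq> {0..2^n}"
  proof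
    fix x assume "x \<in> {card G | G. uniform_hypergraph 2 n G \<and> \<not> has_K2t t G}"
    then obtain G' where x: "x = card G'" and u: "uniform_hypergraph 2 n G'" by auto
    have "G' \<subseteq> Pow {0..<n}" using u unfolding uniform_hypergraph_def by auto
    hence "card G' \<le> card (Pow {0..<n::nat})" by (intro card_mono) auto
    thus "x \<in> {0..2^n}" using x by (simp add: card_Pow)
  qed
  hence "finite {card G | G. uniform_hypergraph 2 n G \<and> \<not> has_K2t t G}"
    using finite_subset by blast
  thus ?thesis unfolding ex_K2t_def using assms by (intro Max_ge) auto
qed

lemma main:
  assumes U: "uniform_hypergraph r n H" and NB: "\<not> has_Berge_K2t t H" and r2: "r \<ge> 2"
  shows "card H \<le> ex_K2t n t * (1 + ((t - 1) choose (r - 2)))"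
proof -
  have finH: "finite H" using U by (rule unif_finite)
  define C where "C = {M. M \<subseteq> H \<and> (\<exists>g. valid_m H M g)}"
  have finC: "finite C" unfolding C_def using finH by simp
  have "{} \<in> C" unfolding C_def valid_m_def by auto
  hence "card ` C \<noteq> {}" by auto
  hence "Max (card ` C) \<in> card ` C" using finC by (intro Max_in) auto
  then obtain M where MC: "M \<in> C" and Mmax: "card M = Max (card ` C)" by auto
  have maxM: "\<And>M'. M' \<in> C \<Longrightarrow> card M' \<le> card M"
    using Mmax finC by simp
  from MC obtain g where vg: "valid_m H M g" unfolding C_def by auto
  have MH: "M \<subseteq> H" and injg: "inj_on g M" and gh: "\<And>h. h \<in> M \<Longrightarrow> g h \<subseteq> h \<and> card (g h) = 2"
    using vg unfolding valid_m_def by auto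
  have finM: "finite M" using MH finH finite_subset by blast
  have covered: "p \<in> g ` M" if h: "h \<in> H - M" and p: "p \<subseteq> h" "card p = 2" for h p
  proof (rule ccontr)
    assume np: "p \<notin> g ` M"
    define g' where "g' = g(h := p)"
    have "valid_m H (insert h M) g'"
      unfolding valid_m_def
    proof (intro conjI)
      show "insert h M \<subseteq> H" using h MH by auto
      have "inj_on g' M" using injg h unfolding g'_def inj_on_def by auto
      moreover have "g' h \<notin> g' ` (M - {h})" using np h unfolding g'_def by auto
      ultimately show "inj_on g' (insert h M)" by simp
      show "\<forall>x\<in>insert h M. g' x \<subseteq> x \<and> card (g' x) = 2"
        using gh p h unfolding g'_def by auto
    qed
    hence "insert h M \<in> C" unfolding C_def using h MH by auto
    hence "card (insert h M) \<le> card M" by (rule maxM)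
    thus False using h finM by simp
  qed
  define G where "G = g ` M"
  have cardG: "card G = card M" unfolding G_def using injg by (simp add: card_image)
  have UG: "uniform_hypergraph 2 n G"
    using U gh MH unfolding uniform_hypergraph_def G_def by fastforce
  have NG: "\<not> has_K2t t G"
  proof
    assume "has_K2t t G"
    then obtain a b B where cp: "is_K2t_copy t a b B" and sub: "K2t_edges a b B \<subseteq> G"
      unfolding has_K2t_def by auto
    define f where "f = inv_into M g"
    have "inj_on f (K2t_edges a b B)" unfolding f_def using sub G_def
      by (intro inj_on_inv_into) auto
    moreover have "f ` K2t_edges a b B \<subseteq> H"
      using sub MH unfolding f_def G_def by (auto intro: inv_into_into)
    moreover have "\<forall>e\<in>K2t_edges a b B. e \<subseteq> f e"
    proof
      fix e assume "e \<in> K2t_edges a b B"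
      hence e: "e \<in> g ` M" using sub G_def by auto
      hence "g (f e) = e" unfolding f_def by (simp add: f_inv_into_f)
      moreover have "f e \<in> M" using e unfolding f_def by (auto intro: inv_into_into)
      ultimately show "e \<subseteq> f e" using gh by metis
    qed
    ultimately have "has_Berge_K2t t H" unfolding has_Berge_K2t_def using cp by blast
    thus False using NB by simp
  qed
  have GE: "card G \<le> ex_K2t n t" using UG NG by (rule ex_K2t_ge)
  have finG: "finite G" using UG by (rule unif_finite)
  define S where "S p = {h \<in> H - M. p \<subseteq> h}" for p
  have bnd: "card (S p) \<le> (t - 1) choose (r - 2)" if pG: "p \<in> G" for p
  proof -
    have "card p = 2" using UG pG unfolding uniform_hypergraph_def by auto
    then obtain u v where p: "p = {u, v}" and uv: "u \<noteq> v" by (auto simp: card_2_iff)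
    define N where "N = {w. {u, w} \<in> G \<and> {v, w} \<in> G}"
    have "N \<subseteq> {0..<n}" using UG unfolding N_def uniform_hypergraph_def by auto
    hence finN: "finite N" using finite_subset by blast
    have cardN: "card N \<le> t - 1"
    proof (rule ccontr)
      assume "\<not> card N \<le> t - 1"
      hence "t \<le> card N" by simp
      then obtain B where BN: "B \<subseteq> N" and cB: "card B = t"
        using obtain_subset_with_card_n by metis
      have nn: "\<And>w. w \<in> N \<Longrightarrow> w \<noteq> u \<and> w \<noteq> v"
      proof -
        fix w assume "w \<in> N"
        hence "{u,w} \<in> G" "{v,w} \<in> G" unfolding N_def by auto
        hence "card {u,w} = 2" "card {v,w} = 2" using UG unfolding uniform_hypergraph_def by auto
        thus "w \<noteq> u \<and> w \<noteq> v" by auto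
      qed
      have "is_K2t_copy t u v B" unfolding is_K2t_copy_def
        using uv cB BN nn finN finite_subset by blast
      moreover have "K2t_edges u v B \<subseteq> G"
        unfolding K2t_edges_def using BN unfolding N_def by auto
      ultimately have "has_K2t t G" unfolding has_K2t_def by blast
      thus False using NG by simp
    qed
    have "inj_on (\<lambda>h. h - p) (S p)"
      unfolding inj_on_def S_def by blast
    moreover have "(\<lambda>h. h - p) ` S p \<subseteq> {D. D \<subseteq> N \<and> card D = r - 2}"
    proof
      fix D assume "D \<in> (\<lambda>h. h - p) ` S p"
      then obtain h where hS: "h \<in> H - M" "p \<subseteq> h" and D: "D = h - p"
        unfolding S_def by auto
      have hc: "card h = r" "finite h" using U hS unfolding uniform_hypergraph_def
        by (auto intro: finite_subset)
      have "D \<subseteq> N"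
      proof
        fix w assume "w \<in> D"
        hence w: "w \<in> h" "w \<noteq> u" "w \<noteq> v" using D p by auto
        have "{u,w} \<in> g ` M" using covered[OF hS(1), of "{u,w}"] w hS p by auto
        moreover have "{v,w} \<in> g ` M" using covered[OF hS(1), of "{v,w}"] w hS p by auto
        ultimately show "w \<in> N" unfolding N_def G_def by auto
      qed
      moreover have "card D = r - 2"
      proof -
        have "finite p" using hc(2) hS(2) finite_subset by blast
        thus ?thesis using D hc hS \<open>card p = 2\<close> by (simp add: card_Diff_subset)
      qed
      ultimately show "D \<in> {D. D \<subseteq> N \<and> card D = r - 2}" by auto
    qed
    ultimately have "card (S p) \<le> card {D. D \<subseteq> N \<and> card D = r - 2}"
      using finN by (intro card_inj_on_le) auto
    also have "\<dots> = card N choose (r - 2)" using finN by (rule n_subsets)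
    also have "\<dots> \<le> (t - 1) choose (r - 2)" using cardN by (rule binomial_right_mono)
    finally show ?thesis .
  qed
  have "H - M \<subseteq> (\<Union>p\<in>G. S p)"
  proof
    fix h assume h: "h \<in> H - M"
    have "card h = r" using U h unfolding uniform_hypergraph_def by auto
    hence "2 \<le> card h" using r2 by simp
    then obtain p where p: "p \<subseteq> h" "card p = 2" using obtain_subset_with_card_n by metis
    have "p \<in> G" using covered[OF h p] G_def by simp
    moreover have "h \<in> S p" using h p unfolding S_def by auto
    ultimately show "h \<in> (\<Union>p\<in>G. S p)" by blast
  qed
  have "card (H - M) \<le> card (\<Union>p\<in>G. S p)"
    using \<open>H - M \<subseteq> (\<Union>p\<in>G. S p)\<close> finH unfolding S_def
    by (intro card_mono finite_subset[OF _ finH]) auto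
  also have "\<dots> \<le> (\<Sum>p\<in>G. card (S p))" using finG by (rule card_UN_le)
  also have "\<dots> \<le> (\<Sum>p\<in>G. (t - 1) choose (r - 2))" using bnd by (intro sum_mono) auto
  also have "\<dots> = card G * ((t - 1) choose (r - 2))" by simp
  finally have "card (H - M) \<le> card G * ((t - 1) choose (r - 2))" .
  moreover have "card H = card M + card (H - M)" using finH MH
    by (metis card_Diff_subset card_mono diff_add_inverse finite_subset le_add_diff_inverse)
  ultimately have "card H \<le> card G * (1 + ((t - 1) choose (r - 2)))"
    using cardG by simp
  also have "\<dots> \<le> ex_K2t n t * (1 + ((t - 1) choose (r - 2)))"
    using GE by (rule mult_right_mono) simp
  finally show ?thesis .
qed

theorem theorem1p5:
  fixes r t n :: nat
  assumes "r \<ge> 3" and "t \<ge> r - 1"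
  shows "real (ex_Berge_K2t r n t)
    \<le> (real (r - 1) / real t * real (t choose (r - 1)) + 2 * real t + 1) * real (ex_K2t n t)"
proof -
  let ?c = "(t - 1) choose (r - 2)"
  let ?S = "{card H | H. uniform_hypergraph r n H \<and> \<not> has_Berge_K2t t H}"
  have t1: "t \<ge> 1" using assms by simp
  have "?S \<subseteq> {0..2^n}"
  proof
    fix x assume "x \<in> ?S"
    then obtain G' where x: "x = card G'" and u: "uniform_hypergraph r n G'" by auto
    have "G' \<subseteq> Pow {0..<n}" using u unfolding uniform_hypergraph_def by auto
    hence "card G' \<le> card (Pow {0..<n::nat})" by (intro card_mono) auto
    thus "x \<in> {0..2^n}" using x by (simp add: card_Pow)
  qed
  hence finS: "finite ?S" using finite_subset by blast
  have "\<not> has_Berge_K2t t {}" unfolding has_Berge_K2t_def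
  proof (intro notI, elim exE conjE)
    fix a b B and f :: "nat set \<Rightarrow> nat set"
    assume cp: "is_K2t_copy t a b B" and fs: "f ` K2t_edges a b B \<subseteq> {}"
    hence e: "K2t_edges a b B = {}" by simp
    have "B \<noteq> {}" using cp t1 unfolding is_K2t_copy_def by auto
    then obtain y where "y \<in> B" by auto
    hence "{a, y} \<in> K2t_edges a b B" unfolding K2t_edges_def by auto
    thus False using e by simp
  qed
  moreover have "uniform_hypergraph r n {}" unfolding uniform_hypergraph_def by simp
  ultimately have "\<exists>H. card ({}::nat set set) = card H \<and> uniform_hypergraph r n H \<and> \<not> has_Berge_K2t t H"
    by blast
  hence "card ({}::nat set set) \<in> ?S" by (simp only: mem_Collect_eq)
  hence "0 \<in> ?S" by simp
  hence neS: "?S \<noteq> {}" by auto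
  have "ex_Berge_K2t r n t \<le> ex_K2t n t * (1 + ?c)"
    unfolding ex_Berge_K2t_def using finS neS
  proof (subst Max_le_iff)
    show "\<forall>a\<in>?S. a \<le> ex_K2t n t * (1 + ?c)"
    proof
      fix a assume "a \<in> ?S"
      then obtain H where "a = card H" "uniform_hypergraph r n H" "\<not> has_Berge_K2t t H" by blast
      thus "a \<le> ex_K2t n t * (1 + ?c)" using main[of r n H t] assms by simp
    qed
  qed simp_all
  hence A0: "real (ex_Berge_K2t r n t) \<le> real (ex_K2t n t * (1 + ?c))"
    by (simp only: of_nat_le_iff)
  hence A: "real (ex_Berge_K2t r n t) \<le> real (ex_K2t n t) * (1 + real ?c)"
    by (simp add: distrib_left)
  have "t * ?c = (t choose (r - 1)) * (r - 1)"
  proof -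
    obtain t' where t': "t = Suc t'" using t1 by (cases t) auto
    obtain r' where r': "r - 1 = Suc r'" "r - 2 = r'" using assms by (cases "r - 1") auto
    show ?thesis unfolding t' r' using Suc_times_binomial_eq[of t' r'] by simp
  qed
  hence "real t * real ?c = real (t choose (r - 1)) * real (r - 1)"
    by (simp only: of_nat_mult[symmetric] of_nat_eq_iff)
  hence B: "real ?c = real (r - 1) / real t * real (t choose (r - 1))"
    using t1 by (simp add: field_simps)
  have "real (ex_K2t n t) * (1 + real ?c)
      \<le> (real (r - 1) / real t * real (t choose (r - 1)) + 2 * real t + 1) * real (ex_K2t n t)"
    unfolding B[symmetric] by (simp add: algebra_simps)
  with A show ?thesis by linarith
qed

end
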